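(* Let $X$ be a pure $d$-dimensional simplicial complex which is a $\gamma$-coboundary expander with coefficients in a group $G$, and let $1\le k\le d-1$. Then for every $f\in C^1(R_k(X);G)$, $\|d_1f\|\ \ge\ \gamma\cdot \mathrm{dist}\big(f, Z^1(R_k(X);G)\big)$, where norms and distances are taken in $R_k(X)$.
   Context: $X(i)$ = faces with $i+1$ elements. For a pure $D$-dimensional complex $Y$, weights $w_Y(\sigma)=|\{\tau\in Y(D):\sigma\subseteq\tau\}|/(\binom{D+1}{|\sigma|}|Y(D)|)$; norm of a set of faces = sum of weights. Link $X_\sigma=\{\tau\setminus\sigma:\sigma\subseteq\tau\in X\}$. Cochains: $C^0(Y;G)$ functions on vertices; $C^1(Y;G)$ functions $f$ on ordered edges with $f(v,u)=f(u,v)^{-1}$; $d_0g(u,v)=g(u)g(v)^{-1}$; $d_1f(u,v,w)=f(u,v)f(v,w)f(w,u)$ on triangles; $B^0$ = constants, $B^1=\mathrm{im}\,d_0$, $Z^1=\{f:d_1f\equiv1\}$; $\|f\|$ = norm of the set of faces where $f\ne1$, $\mathrm{dist}(f,g)=\|fg^{-1}\|$. $h_0(Y;G)=\min_{g\notin B^0}\|d_0g\|/\mathrm{dist}(g,B^0)$, $h_1(Y;G)=\min_{f\notin B^1}\|d_1f\|/\mathrm{dist}(f,B^1)$; $X$ is a $\gamma$-coboundary expander with coefficients in $G$ if $h_0(X_\sigma;G),h_1(X_\sigma;G)\ge\gamma$ for every face $\sigma$ of dimension $<d-2$ (including $\emptyset$). The $k$-th representation complex $R_k(X)$: its vertices are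 the faces in $X(k)$; for $1\le i\le d-k$ its $i$-faces are the sets $S$ of $i+1$ distinct elements of $X(k)$ with $\bigcup S\in X(i+k)$ and $|\bigcap S|=k$; plus the empty face. It is pure of dimension $d-k$ with its own weights. *)

theory Defs
  imports Complex_Main "HOL-Algebra.Group"
begin

definition simplicial_complex :: "'v set set \<Rightarrow> bool" where
  "simplicial_complex X \<longleftrightarrow> finite X \<and> (\<forall>s\<in>X. finite s) \<and> {} \<in> X \<and>
     (\<forall>s\<in>X. \<forall>t. t \<subseteq> s \<longrightarrow> t \<in> X)"

definition faces :: "'v set set \<Rightarrow> nat \<Rightarrow> 'v set set" where
  "faces X i = {s \<in> X. card s = i + 1}"

definition pure :: "'v set set \<Rightarrow> nat \<Rightarrow> bool" where
  "pure X D \<longleftrightarrow> (\<forall>s\<in>X. card s \<le> D + 1) \<and> (\<forall>s\<in>X. \<exists>t\<in>faces X D. s \<subseteq> t)"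

definition link :: "'v set set \<Rightarrow> 'v set \<Rightarrow> 'v set set" where
  "link X \<sigma> = {t - \<sigma> | t. t \<in> X \<and> \<sigma> \<subseteq> t}"

definition weight :: "'v set set \<Rightarrow> nat \<Rightarrow> 'v set \<Rightarrow> real" where
  "weight Y D \<sigma> = real (card {\<tau> \<in> faces Y D. \<sigma> \<subseteq> \<tau>}) /
      (real ((D + 1) choose card \<sigma>) * real (card (faces Y D)))"

definition cnorm :: "'v set set \<Rightarrow> nat \<Rightarrow> 'v set set \<Rightarrow> real" where
  "cnorm Y D A = (\<Sum>\<sigma>\<in>A. weight Y D \<sigma>)"

definition is_edge :: "'v set set \<Rightarrow> 'v \<Rightarrow> 'v \<Rightarrow> bool" where
  "is_edge Y u v \<longleftrightarrow> u \<noteq> v \<and> {u, v} \<in> Y"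

definition is_tri :: "'v set set \<Rightarrow> 'v \<Rightarrow> 'v \<Rightarrow> 'v \<Rightarrow> bool" where
  "is_tri Y u v w \<longleftrightarrow> u \<noteq> v \<and> v \<noteq> w \<and> u \<noteq> w \<and> {u, v, w} \<in> Y"

definition C0 :: "'v set set \<Rightarrow> ('g, 'b) monoid_scheme \<Rightarrow> ('v \<Rightarrow> 'g) set" where
  "C0 Y G = {g. \<forall>v. ({v} \<in> Y \<longrightarrow> g v \<in> carrier G) \<and> ({v} \<notin> Y \<longrightarrow> g v = \<one>\<^bsub>G\<^esub>)}"

definition C1 :: "'v set set \<Rightarrow> ('g, 'b) monoid_scheme \<Rightarrow> ('v \<times> 'v \<Rightarrow> 'g) set" where
  "C1 Y G = {f. \<forall>u v. (is_edge Y u v \<longrightarrow> f (u, v) \<in> carrier G \<and> f (v, u) = inv\<^bsub>G\<^esub> (f (u, v)))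
                   \<and> (\<not> is_edge Y u v \<longrightarrow> f (u, v) = \<one>\<^bsub>G\<^esub>)}"

definition d0 :: "'v set set \<Rightarrow> ('g, 'b) monoid_scheme \<Rightarrow> ('v \<Rightarrow> 'g) \<Rightarrow> ('v \<times> 'v \<Rightarrow> 'g)" where
  "d0 Y G g = (\<lambda>(u, v). if is_edge Y u v then g u \<otimes>\<^bsub>G\<^esub> inv\<^bsub>G\<^esub> (g v) else \<one>\<^bsub>G\<^esub>)"

definition d1 :: "'v set set \<Rightarrow> ('g, 'b) monoid_scheme \<Rightarrow> ('v \<times> 'v \<Rightarrow> 'g) \<Rightarrow> ('v \<times> 'v \<times> 'v \<Rightarrow> 'g)" where
  "d1 Y G f = (\<lambda>(u, v, w). if is_tri Y u v w
       then f (u, v) \<otimes>\<^bsub>G\<^esub> f (v, w) \<otimes>\<^bsub>G\<^esub> f (w, u) else \<one>\<^bsub>G\<^esub>)"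

definition B0 :: "'v set set \<Rightarrow> ('g, 'b) monoid_scheme \<Rightarrow> ('v \<Rightarrow> 'g) set" where
  "B0 Y G = {g \<in> C0 Y G. \<exists>c \<in> carrier G. \<forall>v. {v} \<in> Y \<longrightarrow> g v = c}"

definition B1 :: "'v set set \<Rightarrow> ('g, 'b) monoid_scheme \<Rightarrow> ('v \<times> 'v \<Rightarrow> 'g) set" where
  "B1 Y G = d0 Y G ` C0 Y G"

definition Z1 :: "'v set set \<Rightarrow> ('g, 'b) monoid_scheme \<Rightarrow> ('v \<times> 'v \<Rightarrow> 'g) set" where
  "Z1 Y G = {f \<in> C1 Y G. \<forall>u v w. is_tri Y u v w \<longrightarrow> d1 Y G f (u, v, w) = \<one>\<^bsub>G\<^esub>}"

definition supp0 :: "'v set set \<Rightarrow> ('g, 'b) monoid_scheme \<Rightarrow> ('v \<Rightarrow> 'g) \<Rightarrow> 'v set set" where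
  "supp0 Y G g = {{v} | v. {v} \<in> Y \<and> g v \<noteq> \<one>\<^bsub>G\<^esub>}"

definition supp1 :: "'v set set \<Rightarrow> ('g, 'b) monoid_scheme \<Rightarrow> ('v \<times> 'v \<Rightarrow> 'g) \<Rightarrow> 'v set set" where
  "supp1 Y G f = {{u, v} | u v. is_edge Y u v \<and> f (u, v) \<noteq> \<one>\<^bsub>G\<^esub>}"

definition supp2 :: "'v set set \<Rightarrow> ('g, 'b) monoid_scheme \<Rightarrow> ('v \<times> 'v \<times> 'v \<Rightarrow> 'g) \<Rightarrow> 'v set set" where
  "supp2 Y G h = {{u, v, w} | u v w. is_tri Y u v w \<and> h (u, v, w) \<noteq> \<one>\<^bsub>G\<^esub>}"

definition dist0 :: "'v set set \<Rightarrow> nat \<Rightarrow> ('g, 'b) monoid_scheme \<Rightarrow> ('v \<Rightarrow> 'g) \<Rightarrow> ('v \<Rightarrow> 'g) set \<Rightarrow> real" where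
  "dist0 Y D G g S = Inf ((\<lambda>h. cnorm Y D (supp0 Y G (\<lambda>v. g v \<otimes>\<^bsub>G\<^esub> inv\<^bsub>G\<^esub> (h v)))) ` S)"

definition dist1 :: "'v set set \<Rightarrow> nat \<Rightarrow> ('g, 'b) monoid_scheme \<Rightarrow> ('v \<times> 'v \<Rightarrow> 'g) \<Rightarrow> ('v \<times> 'v \<Rightarrow> 'g) set \<Rightarrow> real" where
  "dist1 Y D G f S = Inf ((\<lambda>h. cnorm Y D (supp1 Y G (\<lambda>e. f e \<otimes>\<^bsub>G\<^esub> inv\<^bsub>G\<^esub> (h e)))) ` S)"

text \<open>h_0(Y;G) \<ge> \<gamma> and h_1(Y;G) \<ge> \<gamma> (Y pure of dimension D), i.e. every ratio in the minimum
  defining h_i is at least \<gamma> (denominators are positive off B^i).\<close>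
definition h0_ge :: "'v set set \<Rightarrow> nat \<Rightarrow> ('g, 'b) monoid_scheme \<Rightarrow> real \<Rightarrow> bool" where
  "h0_ge Y D G \<gamma> \<longleftrightarrow> (\<forall>g \<in> C0 Y G. g \<notin> B0 Y G \<longrightarrow>
      cnorm Y D (supp1 Y G (d0 Y G g)) / dist0 Y D G g (B0 Y G) \<ge> \<gamma>)"

definition h1_ge :: "'v set set \<Rightarrow> nat \<Rightarrow> ('g, 'b) monoid_scheme \<Rightarrow> real \<Rightarrow> bool" where
  "h1_ge Y D G \<gamma> \<longleftrightarrow> (\<forall>f \<in> C1 Y G. f \<notin> B1 Y G \<longrightarrow>
      cnorm Y D (supp2 Y G (d1 Y G f)) / dist1 Y D G f (B1 Y G) \<ge> \<gamma>)"

text \<open>\<gamma>-coboundary expander: for every face \<sigma> of dimension < d-2 (including the empty face),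
  i.e. |\<sigma>| - 1 < d - 2, the link X_\<sigma> (pure of dimension d - |\<sigma>|) has h_0, h_1 \<ge> \<gamma>.\<close>
definition coboundary_expander :: "'v set set \<Rightarrow> nat \<Rightarrow> ('g, 'b) monoid_scheme \<Rightarrow> real \<Rightarrow> bool" where
  "coboundary_expander X d G \<gamma> \<longleftrightarrow> (\<forall>\<sigma> \<in> X. int (card \<sigma>) - 1 < int d - 2 \<longrightarrow>
      h0_ge (link X \<sigma>) (d - card \<sigma>) G \<gamma> \<and> h1_ge (link X \<sigma>) (d - card \<sigma>) G \<gamma>)"

definition rep_complex :: "'v set set \<Rightarrow> nat \<Rightarrow> nat \<Rightarrow> 'v set set set" where
  "rep_complex X d k = {{}} \<union> {{s} | s. s \<in> faces X k} \<union>
     {S. \<exists>i. 1 \<le> i \<and> i \<le> d - k \<and> card S = i + 1 \<and> S \<subseteq> faces X k \<and>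
          \<Union>S \<in> faces X (i + k) \<and> card (\<Inter>S) = k}"

end

theory Submission
  imports Defs
begin


lemma sc_finite: "simplicial_complex X \<Longrightarrow> finite X"
  by (simp add: simplicial_complex_def)
lemma sc_face_finite: "simplicial_complex X \<Longrightarrow> s \<in> X \<Longrightarrow> finite s"
  by (simp add: simplicial_complex_def)
lemma sc_down: "simplicial_complex X \<Longrightarrow> s \<in> X \<Longrightarrow> t \<subseteq> s \<Longrightarrow> t \<in> X"
  by (auto simp add: simplicial_complex_def)

lemma weight_nonneg: "weight Y D s \<ge> 0"
  by (simp add: weight_def)
lemma cnorm_nonneg: "cnorm Y D A \<ge> 0"
  unfolding cnorm_def by (simp add: sum_nonneg weight_nonneg)

lemma supp1_sub: "supp1 Y G F \<subseteq> Y"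
  by (auto simp: supp1_def is_edge_def)

lemma dist1_vals_finite:
  assumes "finite Y"
  shows "finite ((\<lambda>h. cnorm Y D (supp1 Y G (\<lambda>e. F e \<otimes>\<^bsub>G\<^esub> inv\<^bsub>G\<^esub> (h e)))) ` S)"
proof -
  have "(\<lambda>h. cnorm Y D (supp1 Y G (\<lambda>e. F e \<otimes>\<^bsub>G\<^esub> inv\<^bsub>G\<^esub> (h e)))) ` S \<subseteq> cnorm Y D ` Pow Y"
    using supp1_sub by blast
  then show ?thesis using assms finite_subset by blast
qed

lemma dist1_lower:
  assumes "finite Y" "h \<in> S"
  shows "dist1 Y D G F S \<le> cnorm Y D (supp1 Y G (\<lambda>e. F e \<otimes>\<^bsub>G\<^esub> inv\<^bsub>G\<^esub> (h e)))"
proof -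
  have "bdd_below ((\<lambda>h. cnorm Y D (supp1 Y G (\<lambda>e. F e \<otimes>\<^bsub>G\<^esub> inv\<^bsub>G\<^esub> (h e)))) ` S)"
    by (rule bdd_below_finite) (rule dist1_vals_finite[OF assms(1)])
  then show ?thesis unfolding dist1_def by (rule cInf_lower[OF imageI[OF assms(2)]])
qed

lemma dist1_attained:
  assumes "finite Y" "S \<noteq> {}"
  shows "\<exists>h\<in>S. dist1 Y D G F S = cnorm Y D (supp1 Y G (\<lambda>e. F e \<otimes>\<^bsub>G\<^esub> inv\<^bsub>G\<^esub> (h e)))"
proof -
  let ?V = "(\<lambda>h. cnorm Y D (supp1 Y G (\<lambda>e. F e \<otimes>\<^bsub>G\<^esub> inv\<^bsub>G\<^esub> (h e)))) ` S"
  have "finite ?V" "?V \<noteq> {}" using dist1_vals_finite[OF assms(1)] assms(2) by auto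
  then have "Inf ?V = Min ?V" by (rule cInf_eq_Min)
  moreover have "Min ?V \<in> ?V" using \<open>finite ?V\<close> \<open>?V \<noteq> {}\<close> by (rule Min_in)
  ultimately have "Inf ?V \<in> ?V" by simp
  then show ?thesis unfolding dist1_def by auto
qed

lemma dist1_nonneg:
  assumes "finite Y" "S \<noteq> {}"
  shows "dist1 Y D G F S \<ge> 0"
  using dist1_attained[OF assms, of D G F] cnorm_nonneg by metis

lemma one_Z1: "group G \<Longrightarrow> (\<lambda>e. \<one>\<^bsub>G\<^esub>) \<in> Z1 Y G"
  by (auto simp: Z1_def C1_def d1_def group.is_monoid monoid.one_closed monoid.inv_one)

lemma Z1_dist_zero:
  assumes "group G" "finite Y" "F \<in> Z1 Y G"
  shows "dist1 Y D G F (Z1 Y G) = 0"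
proof -
  have "supp1 Y G (\<lambda>e. F e \<otimes>\<^bsub>G\<^esub> inv\<^bsub>G\<^esub> (F e)) = {}"
    using assms(1,3) by (auto simp: supp1_def Z1_def C1_def group.r_inv)
  then have "dist1 Y D G F (Z1 Y G) \<le> 0"
    using dist1_lower[OF assms(2) assms(3), of D G F] by (simp add: cnorm_def)
  moreover have "dist1 Y D G F (Z1 Y G) \<ge> 0"
    using dist1_nonneg[OF assms(2)] assms(3) by blast
  ultimately show ?thesis by simp
qed

lemma B1_sub_Z1:
  assumes "simplicial_complex Y" "group G"
  shows "B1 Y G \<subseteq> Z1 Y G"
proof
  fix F assume "F \<in> B1 Y G"
  then obtain g where g: "g \<in> C0 Y G" "F = d0 Y G g" by (auto simp: B1_def)
  have gc: "\<And>v. g v \<in> carrier G" using g(1) assms(2) unfolding C0_def by (metis (mono_tags, lifting) group.is_monoid mem_Collect_eq monoid.one_closed)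
  interpret group G by fact
  have ie: "is_edge Y v u" if "is_edge Y u v" for u v
    using that by (auto simp: is_edge_def insert_commute)
  have "F \<in> C1 Y G"
    unfolding C1_def
  proof (intro CollectI allI conjI impI)
    fix u v assume e: "is_edge Y u v"
    show "F (u, v) \<in> carrier G" using e gc by (simp add: g(2) d0_def)
    show "F (v, u) = inv\<^bsub>G\<^esub> F (u, v)" using e ie[OF e] gc by (simp add: g(2) d0_def inv_mult_group)
  next
    fix u v assume "\<not> is_edge Y u v"
    then show "F (u, v) = \<one>\<^bsub>G\<^esub>" by (simp add: g(2) d0_def)
  qed
  moreover have "d1 Y G F (u, v, w) = \<one>\<^bsub>G\<^esub>" if "is_tri Y u v w" for u v w
  proof -
    have e: "is_edge Y u v" "is_edge Y v w" "is_edge Y w u"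
      using that sc_down[OF assms(1)] by (auto simp: is_tri_def is_edge_def)
    have "g u \<otimes>\<^bsub>G\<^esub> inv\<^bsub>G\<^esub> g v \<otimes>\<^bsub>G\<^esub> (g v \<otimes>\<^bsub>G\<^esub> inv\<^bsub>G\<^esub> g w) \<otimes>\<^bsub>G\<^esub> (g w \<otimes>\<^bsub>G\<^esub> inv\<^bsub>G\<^esub> g u) = \<one>\<^bsub>G\<^esub>"
    proof -
      have c: "\<And>a y. a \<in> carrier G \<Longrightarrow> y \<in> carrier G \<Longrightarrow> inv\<^bsub>G\<^esub> a \<otimes>\<^bsub>G\<^esub> (a \<otimes>\<^bsub>G\<^esub> y) = y"
        by (simp add: m_assoc[symmetric])
      show ?thesis using gc by (simp add: m_assoc c)
    qed
    then show ?thesis using that e by (simp add: d1_def g(2) d0_def)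
  qed
  ultimately show "F \<in> Z1 Y G" by (auto simp: Z1_def)
qed

lemma C0_nonempty: "group G \<Longrightarrow> (\<lambda>v. \<one>\<^bsub>G\<^esub>) \<in> C0 Y G"
  by (auto simp: C0_def group.is_monoid monoid.one_closed)

lemma local_ineq:
  assumes "simplicial_complex Y" "group G" "h1_ge Y D G \<gamma>" "\<gamma> > 0" "g \<in> C1 Y G"
  shows "\<gamma> * dist1 Y D G g (Z1 Y G) \<le> cnorm Y D (supp2 Y G (d1 Y G g))"
proof (cases "g \<in> B1 Y G")
  case True
  then have "g \<in> Z1 Y G" using B1_sub_Z1[OF assms(1,2)] by blast
  then show ?thesis using Z1_dist_zero[OF assms(2) sc_finite[OF assms(1)]] cnorm_nonneg by simp
next
  case False
  have fin: "finite Y" using sc_finite[OF assms(1)] .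
  have B1ne: "B1 Y G \<noteq> {}" using C0_nonempty[OF assms(2)] by (auto simp: B1_def)
  have r: "cnorm Y D (supp2 Y G (d1 Y G g)) / dist1 Y D G g (B1 Y G) \<ge> \<gamma>"
    using assms(3,5) False by (auto simp: h1_ge_def)
  have dpos: "dist1 Y D G g (B1 Y G) > 0"
  proof -
    have "dist1 Y D G g (B1 Y G) \<noteq> 0" using r assms(4) by auto
    then show ?thesis using dist1_nonneg[OF fin B1ne, of D G g] by linarith
  qed
  have c1: "\<gamma> * dist1 Y D G g (B1 Y G) \<le> cnorm Y D (supp2 Y G (d1 Y G g))"
    using r dpos by (simp add: pos_le_divide_eq)
  obtain h where h: "h \<in> B1 Y G" "dist1 Y D G g (B1 Y G) = cnorm Y D (supp1 Y G (\<lambda>e. g e \<otimes>\<^bsub>G\<^esub> inv\<^bsub>G\<^esub> (h e)))"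
    using dist1_attained[OF fin B1ne] by blast
  have "dist1 Y D G g (Z1 Y G) \<le> dist1 Y D G g (B1 Y G)"
    using h dist1_lower[OF fin, of h "Z1 Y G"] B1_sub_Z1[OF assms(1,2)] by auto
  then show ?thesis using c1 assms(4)
    by (meson mult_left_mono less_imp_le order_trans)
qed



lemma link_mem: "A \<in> link X \<tau> \<longleftrightarrow> A \<inter> \<tau> = {} \<and> A \<union> \<tau> \<in> X"
proof
  assume "A \<in> link X \<tau>"
  then obtain t where "t \<in> X" "\<tau> \<subseteq> t" "A = t - \<tau>" by (auto simp: link_def)
  moreover have "(t - \<tau>) \<union> \<tau> = t" using \<open>\<tau> \<subseteq> t\<close> by blast
  ultimately show "A \<inter> \<tau> = {} \<and> A \<union> \<tau> \<in> X" by auto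
next
  assume a: "A \<inter> \<tau> = {} \<and> A \<union> \<tau> \<in> X"
  then have "A = (A \<union> \<tau>) - \<tau>" by blast
  then show "A \<in> link X \<tau>" unfolding link_def using a by blast
qed

lemma edge_link: "is_edge (link X \<tau>) u v \<longleftrightarrow> u \<noteq> v \<and> u \<notin> \<tau> \<and> v \<notin> \<tau> \<and> insert u (insert v \<tau>) \<in> X"
  by (auto simp: is_edge_def link_mem)

lemma tri_link: "is_tri (link X \<tau>) u v w \<longleftrightarrow> u \<noteq> v \<and> v \<noteq> w \<and> u \<noteq> w \<and> u \<notin> \<tau> \<and> v \<notin> \<tau> \<and> w \<notin> \<tau>
   \<and> insert u (insert v (insert w \<tau>)) \<in> X"
  by (auto simp: is_tri_def link_mem)

lemma link_sc:
  assumes "simplicial_complex X" "\<tau> \<in> X"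
  shows "simplicial_complex (link X \<tau>)"
proof -
  have "link X \<tau> \<subseteq> (\<lambda>t. t - \<tau>) ` X" by (auto simp: link_def)
  then have "finite (link X \<tau>)" using sc_finite[OF assms(1)] finite_surj by blast
  moreover have "\<forall>s\<in>link X \<tau>. finite s"
    using sc_face_finite[OF assms(1)] by (metis finite_Un link_mem)
  moreover have "{} \<in> link X \<tau>" using assms(2) by (simp add: link_mem)
  moreover have "\<forall>s\<in>link X \<tau>. \<forall>t. t \<subseteq> s \<longrightarrow> t \<in> link X \<tau>"
  proof (intro ballI allI impI)
    fix s t assume "s \<in> link X \<tau>" "t \<subseteq> s"
    then have "s \<inter> \<tau> = {}" "s \<union> \<tau> \<in> X" "t \<union> \<tau> \<subseteq> s \<union> \<tau>" by (auto simp: link_mem)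
    then show "t \<in> link X \<tau>" using sc_down[OF assms(1)] \<open>t \<subseteq> s\<close> by (auto simp: link_mem)
  qed
  ultimately show ?thesis by (simp add: simplicial_complex_def)
qed

lemma card_plus_one_insert:
  assumes "finite a" "\<tau> \<subseteq> a" "card a = card \<tau> + 1"
  shows "\<exists>u. u \<notin> \<tau> \<and> a = insert u \<tau>"
proof -
  have "card (a - \<tau>) = 1" using assms by (simp add: card_Diff_subset finite_subset)
  then obtain u where "a - \<tau> = {u}" by (auto simp: card_1_singleton_iff)
  then show ?thesis using assms(2) by blast
qed

definition lift :: "'v set \<Rightarrow> 'v set \<Rightarrow> 'v set set" where
  "lift \<tau> A = (\<lambda>x. insert x \<tau>) ` A"

lemma lift_inter:
  assumes "A \<inter> \<tau> = {}" "u \<in> A" "v \<in> A" "u \<noteq> v"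
  shows "\<Inter>(lift \<tau> A) = \<tau>"
proof
  show "\<tau> \<subseteq> \<Inter>(lift \<tau> A)" by (auto simp: lift_def)
  show "\<Inter>(lift \<tau> A) \<subseteq> \<tau>"
  proof
    fix y assume "y \<in> \<Inter>(lift \<tau> A)"
    then have "y \<in> insert u \<tau>" "y \<in> insert v \<tau>" using assms by (auto simp: lift_def)
    then show "y \<in> \<tau>" using assms(4) by auto
  qed
qed

lemma lift_inj: "inj_on (lift \<tau>) {A. A \<inter> \<tau> = {}}"
proof (rule inj_onI)
  fix A B assume A: "A \<in> {A. A \<inter> \<tau> = {}}" and B: "B \<in> {A. A \<inter> \<tau> = {}}" and e: "lift \<tau> A = lift \<tau> B"
  have *: "A \<subseteq> B" if "A \<inter> \<tau> = {}" "B \<inter> \<tau> = {}" "lift \<tau> A = lift \<tau> B" for A B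
  proof
    fix x assume "x \<in> A"
    then have "insert x \<tau> \<in> lift \<tau> B" using that(3) by (auto simp: lift_def)
    then obtain y where "y \<in> B" "insert x \<tau> = insert y \<tau>" by (auto simp: lift_def)
    moreover have "x \<notin> \<tau>" "y \<notin> \<tau>" using \<open>x \<in> A\<close> \<open>y \<in> B\<close> that by auto
    ultimately show "x \<in> B" by (metis insertCI insertE)
  qed
  show "A = B" using *[of A B] *[of B A] A B e by auto
qed

lemma card_lift: "A \<inter> \<tau> = {} \<Longrightarrow> card (lift \<tau> A) = card A"
  unfolding lift_def
  by (rule card_image) (auto intro!: inj_onI simp: insert_ident)

locale repc =
  fixes X :: "'v set set" and d k :: nat
  assumes sc: "simplicial_complex X" and k1: "1 \<le> k" and kd: "k < d"
begin

abbreviation "R \<equiv> rep_complex X d k"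

lemma finX: "finite X" using sc_finite[OF sc] .
lemma face_fin: "s \<in> X \<Longrightarrow> finite s" using sc_face_finite[OF sc] .

lemma R_sub: "R \<subseteq> Pow (faces X k)"
  by (auto simp: rep_complex_def)

lemma finR: "finite R"
proof -
  have "finite (faces X k)" using finX by (simp add: faces_def)
  then show ?thesis using R_sub finite_subset by blast
qed

lemma R_big:
  assumes "2 \<le> card S"
  shows "S \<in> R \<longleftrightarrow> 1 \<le> card S - 1 \<and> card S - 1 \<le> d - k \<and> S \<subseteq> faces X k \<and>
     \<Union>S \<in> faces X (card S - 1 + k) \<and> card (\<Inter>S) = k"
proof -
  have ne: "S \<noteq> {}" "\<And>s. S \<noteq> {s}" using assms by auto
  have "S \<in> R \<longleftrightarrow> (\<exists>i. 1 \<le> i \<and> i \<le> d - k \<and> card S = i + 1 \<and> S \<subseteq> faces X k \<and>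
          \<Union>S \<in> faces X (i + k) \<and> card (\<Inter>S) = k)"
    unfolding rep_complex_def using ne by blast
  also have "\<dots> \<longleftrightarrow> 1 \<le> card S - 1 \<and> card S - 1 \<le> d - k \<and> S \<subseteq> faces X k \<and>
     \<Union>S \<in> faces X (card S - 1 + k) \<and> card (\<Inter>S) = k"
  proof
    assume "\<exists>i. 1 \<le> i \<and> i \<le> d - k \<and> card S = i + 1 \<and> S \<subseteq> faces X k \<and>
          \<Union>S \<in> faces X (i + k) \<and> card (\<Inter>S) = k"
    then obtain i where "1 \<le> i \<and> i \<le> d - k \<and> card S = i + 1 \<and> S \<subseteq> faces X k \<and>
          \<Union>S \<in> faces X (i + k) \<and> card (\<Inter>S) = k" by blast
    then show "1 \<le> card S - 1 \<and> card S - 1 \<le> d - k \<and> S \<subseteq> faces X k \<and>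
     \<Union>S \<in> faces X (card S - 1 + k) \<and> card (\<Inter>S) = k" by simp
  next
    assume "1 \<le> card S - 1 \<and> card S - 1 \<le> d - k \<and> S \<subseteq> faces X k \<and>
     \<Union>S \<in> faces X (card S - 1 + k) \<and> card (\<Inter>S) = k"
    then show "\<exists>i. 1 \<le> i \<and> i \<le> d - k \<and> card S = i + 1 \<and> S \<subseteq> faces X k \<and>
          \<Union>S \<in> faces X (i + k) \<and> card (\<Inter>S) = k"
      using assms by (intro exI[of _ "card S - 1"]) simp
  qed
  finally show ?thesis .
qed

lemma pair_R:
  assumes "a \<noteq> b"
  shows "{a, b} \<in> R \<longleftrightarrow> a \<in> faces X k \<and> b \<in> faces X k \<and> a \<union> b \<in> faces X (k + 1) \<and> card (a \<inter> b) = k"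
proof -
  have c: "card {a, b} = 2" using assms by simp
  show ?thesis
    using R_big[of "{a, b}"] c kd by (simp add: add.commute) linarith
qed

lemma triple_R:
  assumes "a \<noteq> b" "b \<noteq> c" "a \<noteq> c"
  shows "{a, b, c} \<in> R \<longleftrightarrow> 2 \<le> d - k \<and> a \<in> faces X k \<and> b \<in> faces X k \<and> c \<in> faces X k \<and>
      a \<union> b \<union> c \<in> faces X (k + 2) \<and> card (a \<inter> b \<inter> c) = k"
proof -
  have c: "card {a, b, c} = 3" using assms by simp
  show ?thesis
    using R_big[of "{a, b, c}"] c by (simp add: add.commute Un_assoc Int_assoc)
qed

lemma split_face:
  assumes "a \<in> faces X k" "\<tau> \<subseteq> a" "card \<tau> = k"
  shows "\<exists>u. u \<notin> \<tau> \<and> a = insert u \<tau>"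
proof -
  have "finite a" using assms(1) face_fin by (simp add: faces_def)
  moreover have "card a = card \<tau> + 1" using assms by (simp add: faces_def)
  ultimately show ?thesis using card_plus_one_insert assms(2) by blast
qed

lemma tau_face:
  assumes "a \<in> faces X k" "\<tau> \<subseteq> a" "card \<tau> = k"
  shows "\<tau> \<in> faces X (k - 1)"
proof -
  have "\<tau> \<in> X" using assms(1,2) sc_down[OF sc] by (auto simp: faces_def)
  then show ?thesis using assms(3) k1 by (simp add: faces_def)
qed

lemma ins_face:
  assumes "\<tau> \<in> faces X (k - 1)" "u \<notin> \<tau>" "insert u \<tau> \<subseteq> s" "s \<in> X"
  shows "insert u \<tau> \<in> faces X k"
proof -
  have "finite \<tau>" "card \<tau> = k" using assms(1) face_fin k1 by (auto simp: faces_def)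
  then have "card (insert u \<tau>) = k + 1" using assms(2) by simp
  moreover have "insert u \<tau> \<in> X" using sc_down[OF sc assms(4) assms(3)] .
  ultimately show ?thesis by (simp add: faces_def)
qed

lemma edge_R:
  "is_edge R a b \<longleftrightarrow> (\<exists>\<tau> u v. \<tau> \<in> faces X (k - 1) \<and> is_edge (link X \<tau>) u v \<and> a = insert u \<tau> \<and> b = insert v \<tau>)"
proof
  assume e: "is_edge R a b"
  then have ab: "a \<noteq> b" and m: "{a, b} \<in> R" by (auto simp: is_edge_def)
  then have f: "a \<in> faces X k" "b \<in> faces X k" "a \<union> b \<in> faces X (k + 1)" "card (a \<inter> b) = k"
    using pair_R by auto
  define \<tau> where "\<tau> = a \<inter> b"
  obtain u where u: "u \<notin> \<tau>" "a = insert u \<tau>"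
    using split_face[OF f(1), of \<tau>] f(4) unfolding \<tau>_def by blast
  obtain v where v: "v \<notin> \<tau>" "b = insert v \<tau>"
    using split_face[OF f(2), of \<tau>] f(4) unfolding \<tau>_def by blast
  have uv: "u \<noteq> v" using u v ab by auto
  have t: "\<tau> \<in> faces X (k - 1)" using tau_face[OF f(1), of \<tau>] f(4) unfolding \<tau>_def by blast
  have "a \<union> b = insert u (insert v \<tau>)" using u v by auto
  then have "insert u (insert v \<tau>) \<in> X" using f(3) by (simp add: faces_def)
  then have "is_edge (link X \<tau>) u v" using u v uv by (simp add: edge_link)
  then show "\<exists>\<tau> u v. \<tau> \<in> faces X (k - 1) \<and> is_edge (link X \<tau>) u v \<and> a = insert u \<tau> \<and> b = insert v \<tau>"
    using t u v by blast
next
  assume "\<exists>\<tau> u v. \<tau> \<in> faces X (k - 1) \<and> is_edge (link X \<tau>) u v \<and> a = insert u \<tau> \<and> b = insert v \<tau>"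
  then obtain \<tau> u v where t: "\<tau> \<in> faces X (k - 1)" and uv: "u \<noteq> v" "u \<notin> \<tau>" "v \<notin> \<tau>"
    and X: "insert u (insert v \<tau>) \<in> X" and ab: "a = insert u \<tau>" "b = insert v \<tau>"
    by (auto simp: edge_link)
  have ft: "finite \<tau>" "card \<tau> = k" using t face_fin k1 by (auto simp: faces_def)
  have "a \<in> faces X k" using ins_face[OF t uv(2) _ X] ab by blast
  moreover have "b \<in> faces X k" using ins_face[OF t uv(3) _ X] ab by blast
  moreover have "a \<union> b = insert u (insert v \<tau>)" using ab by auto
  moreover have "card (insert u (insert v \<tau>)) = k + 2" using ft uv by simp
  moreover have "a \<inter> b = \<tau>" using ab uv by auto
  moreover have "a \<noteq> b" using ab uv by auto
  ultimately show "is_edge R a b" using pair_R ft X by (simp add: is_edge_def faces_def)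
qed

lemma tri_R:
  assumes "2 \<le> d - k"
  shows "is_tri R a b c \<longleftrightarrow> (\<exists>\<tau> u v w. \<tau> \<in> faces X (k - 1) \<and> is_tri (link X \<tau>) u v w \<and>
      a = insert u \<tau> \<and> b = insert v \<tau> \<and> c = insert w \<tau>)"
proof
  assume e: "is_tri R a b c"
  then have ab: "a \<noteq> b" "b \<noteq> c" "a \<noteq> c" and m: "{a, b, c} \<in> R" by (auto simp: is_tri_def)
  then have f: "a \<in> faces X k" "b \<in> faces X k" "c \<in> faces X k" "a \<union> b \<union> c \<in> faces X (k + 2)"
     "card (a \<inter> b \<inter> c) = k"
    using triple_R by auto
  define \<tau> where "\<tau> = a \<inter> b \<inter> c"
  obtain u where u: "u \<notin> \<tau>" "a = insert u \<tau>"
    using split_face[OF f(1), of \<tau>] f(5) unfolding \<tau>_def by blast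
  obtain v where v: "v \<notin> \<tau>" "b = insert v \<tau>"
    using split_face[OF f(2), of \<tau>] f(5) unfolding \<tau>_def by blast
  obtain w where w: "w \<notin> \<tau>" "c = insert w \<tau>"
    using split_face[OF f(3), of \<tau>] f(5) unfolding \<tau>_def by blast
  have uv: "u \<noteq> v" "v \<noteq> w" "u \<noteq> w" using u v w ab by auto
  have t: "\<tau> \<in> faces X (k - 1)" using tau_face[OF f(1), of \<tau>] f(5) unfolding \<tau>_def by blast
  have "a \<union> b \<union> c = insert u (insert v (insert w \<tau>))" using u v w by auto
  then have "insert u (insert v (insert w \<tau>)) \<in> X" using f(4) by (simp add: faces_def)
  then have "is_tri (link X \<tau>) u v w" using u v w uv by (simp add: tri_link)
  then show "\<exists>\<tau> u v w. \<tau> \<in> faces X (k - 1) \<and> is_tri (link X \<tau>) u v w \<and>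
      a = insert u \<tau> \<and> b = insert v \<tau> \<and> c = insert w \<tau>"
    using t u v w by blast
next
  assume "\<exists>\<tau> u v w. \<tau> \<in> faces X (k - 1) \<and> is_tri (link X \<tau>) u v w \<and>
      a = insert u \<tau> \<and> b = insert v \<tau> \<and> c = insert w \<tau>"
  then obtain \<tau> u v w where t: "\<tau> \<in> faces X (k - 1)" and uv: "u \<noteq> v" "v \<noteq> w" "u \<noteq> w" "u \<notin> \<tau>" "v \<notin> \<tau>" "w \<notin> \<tau>"
    and X: "insert u (insert v (insert w \<tau>)) \<in> X" and ab: "a = insert u \<tau>" "b = insert v \<tau>" "c = insert w \<tau>"
    by (auto simp: tri_link)
  have ft: "finite \<tau>" "card \<tau> = k" using t face_fin k1 by (auto simp: faces_def)
  have "a \<in> faces X k" using ins_face[OF t uv(4) _ X] ab by blast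
  moreover have "b \<in> faces X k" using ins_face[OF t uv(5) _ X] ab by blast
  moreover have "c \<in> faces X k" using ins_face[OF t uv(6) _ X] ab by blast
  moreover have "a \<union> b \<union> c = insert u (insert v (insert w \<tau>))" using ab by auto
  moreover have "card (insert u (insert v (insert w \<tau>))) = k + 3" using ft uv by simp
  moreover have "a \<inter> b \<inter> c = \<tau>" using ab uv by auto
  moreover have "a \<noteq> b" "b \<noteq> c" "a \<noteq> c" using ab uv by auto
  ultimately show "is_tri R a b c" using triple_R assms ft X by (simp add: is_tri_def faces_def)
qed

lemma no_tri_R: "d - k = 1 \<Longrightarrow> \<not> is_tri R a b c"
  using triple_R by (auto simp: is_tri_def)


lemma finT: "finite (faces X (k - 1))"
  using finX by (simp add: faces_def)

lemma fin_link: "\<tau> \<in> faces X (k - 1) \<Longrightarrow> finite (link X \<tau>)"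
  using link_sc[OF sc] sc_finite by (auto simp: faces_def)

lemma two_elems: "2 \<le> card F \<Longrightarrow> \<exists>x y. x \<in> F \<and> y \<in> F \<and> x \<noteq> y"
  by (metis One_nat_def card.infinite card_le_Suc0_iff_eq not_less_eq_eq numeral_2_eq_2 zero_le)

lemma Union_lift: "F \<noteq> {} \<Longrightarrow> \<Union>(lift \<tau> F) = F \<union> \<tau>"
  by (auto simp: lift_def)

lemma top_faces_card:
  assumes t: "\<tau> \<in> faces X (k - 1)" and A: "A \<inter> \<tau> = {}" "u \<in> A" "v \<in> A" "u \<noteq> v"
  shows "card {T \<in> faces R (d - k). lift \<tau> A \<subseteq> T} = card {F \<in> faces (link X \<tau>) (d - k). A \<subseteq> F}"
proof -
  have ft: "finite \<tau>" "card \<tau> = k" using t face_fin k1 by (auto simp: faces_def)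
  have inj: "inj_on (lift \<tau>) {F \<in> faces (link X \<tau>) (d - k). A \<subseteq> F}"
    by (rule inj_on_subset[OF lift_inj]) (auto simp: faces_def link_mem)
  have img: "lift \<tau> ` {F \<in> faces (link X \<tau>) (d - k). A \<subseteq> F} = {T \<in> faces R (d - k). lift \<tau> A \<subseteq> T}"
  proof (intro equalityI subsetI)
    fix T assume "T \<in> lift \<tau> ` {F \<in> faces (link X \<tau>) (d - k). A \<subseteq> F}"
    then obtain F where F: "F \<in> link X \<tau>" "card F = d - k + 1" "A \<subseteq> F" and T: "T = lift \<tau> F"
      by (auto simp: faces_def)
    have Fd: "F \<inter> \<tau> = {}" "F \<union> \<tau> \<in> X" using F(1) by (auto simp: link_mem)
    have cT: "card T = d - k + 1" using card_lift[OF Fd(1)] F(2) T by simp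
    have c2: "2 \<le> card T" using cT kd by simp
    have Tsub: "T \<subseteq> faces X k"
    proof
      fix t assume "t \<in> T"
      then obtain x where x: "x \<in> F" "t = insert x \<tau>" using T by (auto simp: lift_def)
      have "x \<notin> \<tau>" using x Fd by auto
      moreover have "insert x \<tau> \<subseteq> F \<union> \<tau>" using x by auto
      ultimately show "t \<in> faces X k" using ins_face[OF t _ _ Fd(2)] x by blast
    qed
    have Fne: "F \<noteq> {}" using F(2) by auto
    have fF: "finite F" using F(2) card.infinite by fastforce
    have UT: "\<Union>T = F \<union> \<tau>" using Union_lift[OF Fne] T by simp
    have "card (F \<union> \<tau>) = d + 1" using card_Un_disjoint[OF fF ft(1) Fd(1)] F(2) ft(2) kd by simp
    then have UTf: "\<Union>T \<in> faces X (card T - 1 + k)" using UT Fd(2) cT kd by (simp add: faces_def)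
    obtain x y where xy: "x \<in> F" "y \<in> F" "x \<noteq> y" using two_elems[of F] F(2) kd by (metis c2 cT)
    have IT: "\<Inter>T = \<tau>" using lift_inter[OF Fd(1) xy] T by simp
    have "T \<in> R" using R_big[OF c2] cT kd Tsub UTf IT ft(2) by simp
    moreover have "lift \<tau> A \<subseteq> T" using F(3) T by (auto simp: lift_def)
    ultimately show "T \<in> {T \<in> faces R (d - k). lift \<tau> A \<subseteq> T}" using cT by (simp add: faces_def)
  next
    fix T assume "T \<in> {T \<in> faces R (d - k). lift \<tau> A \<subseteq> T}"
    then have TR: "T \<in> R" and cT: "card T = d - k + 1" and AT: "lift \<tau> A \<subseteq> T" by (auto simp: faces_def)
    have c2: "2 \<le> card T" using cT kd by simp
    have Tp: "T \<subseteq> faces X k" "\<Union>T \<in> faces X (card T - 1 + k)" "card (\<Inter>T) = k"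
      using R_big[OF c2] TR by auto
    have "\<Inter>T \<subseteq> \<Inter>(lift \<tau> A)" using AT by (rule Inter_anti_mono)
    then have IT0: "\<Inter>T \<subseteq> \<tau>" using lift_inter[OF A] by simp
    have IT: "\<Inter>T = \<tau>" using card_subset_eq[OF ft(1) IT0] Tp(3) ft(2) by simp
    have form: "\<exists>x. x \<notin> \<tau> \<and> t = insert x \<tau>" if "t \<in> T" for t
    proof -
      have "\<tau> \<subseteq> t" using IT that by blast
      then show ?thesis using split_face[of t \<tau>] that Tp(1) ft(2) by blast
    qed
    define F where "F = {x. x \<notin> \<tau> \<and> insert x \<tau> \<in> T}"
    have LF: "lift \<tau> F = T"
    proof (intro equalityI subsetI)
      fix t assume "t \<in> lift \<tau> F" then show "t \<in> T" by (auto simp: lift_def F_def)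
    next
      fix t assume "t \<in> T"
      then obtain x where "x \<notin> \<tau>" "t = insert x \<tau>" using form by blast
      then show "t \<in> lift \<tau> F" using \<open>t \<in> T\<close> by (auto simp: lift_def F_def)
    qed
    have Fd: "F \<inter> \<tau> = {}" by (auto simp: F_def)
    have Fne: "F \<noteq> {}" using LF c2 by (auto simp: lift_def)
    have "F \<union> \<tau> = \<Union>T" using Union_lift[OF Fne, of \<tau>] LF by simp
    then have "F \<union> \<tau> \<in> X" using Tp(2) by (simp add: faces_def)
    then have FL: "F \<in> link X \<tau>" using Fd by (simp add: link_mem)
    have "card F = d - k + 1" using card_lift[OF Fd] LF cT by simp
    moreover have "A \<subseteq> F" using AT A(1) by (auto simp: lift_def F_def)
    ultimately show "T \<in> lift \<tau> ` {F \<in> faces (link X \<tau>) (d - k). A \<subseteq> F}"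
      using FL LF by (auto simp: faces_def)
  qed
  show ?thesis using card_image[OF inj] img by simp
qed

definition cw :: "'v set \<Rightarrow> real" where
  "cw \<tau> = real (card (faces (link X \<tau>) (d - k))) / real (card (faces R (d - k)))"

lemma cw_nonneg: "cw \<tau> \<ge> 0" by (simp add: cw_def)

lemma weight_lift:
  assumes t: "\<tau> \<in> faces X (k - 1)" and A: "A \<inter> \<tau> = {}" "u \<in> A" "v \<in> A" "u \<noteq> v"
  shows "weight R (d - k) (lift \<tau> A) = cw \<tau> * weight (link X \<tau>) (d - k) A"
proof -
  define N where "N = real (card {F \<in> faces (link X \<tau>) (d - k). A \<subseteq> F})"
  define l where "l = real (card (faces (link X \<tau>) (d - k)))"
  define r where "r = real (card (faces R (d - k)))"
  define B where "B = real ((d - k + 1) choose card A)"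
  have wR: "weight R (d - k) (lift \<tau> A) = N / (B * r)"
    unfolding weight_def N_def B_def r_def using top_faces_card[OF assms] card_lift[OF A(1)] by simp
  have wL: "weight (link X \<tau>) (d - k) A = N / (B * l)"
    unfolding weight_def N_def B_def l_def by simp
  have cwe: "cw \<tau> = l / r" unfolding cw_def l_def r_def by simp
  show ?thesis
  proof (cases "l = 0")
    case True
    then have "faces (link X \<tau>) (d - k) = {}"
      using fin_link[OF t] unfolding l_def by (simp add: faces_def)
    then have "N = 0" unfolding N_def by simp
    then show ?thesis using wR wL by simp
  next
    case False
    then show ?thesis using wR wL cwe by (simp add: field_simps)
  qed
qed

lemma cnorm_decomp:
  assumes "\<And>\<tau>. \<tau> \<in> faces X (k - 1) \<Longrightarrow> AA \<tau> \<subseteq> {A. A \<in> link X \<tau> \<and> (\<exists>u v. u \<in> A \<and> v \<in> A \<and> u \<noteq> v)}"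
  shows "cnorm R (d - k) (\<Union>\<tau>\<in>faces X (k - 1). lift \<tau> ` AA \<tau>)
       = (\<Sum>\<tau>\<in>faces X (k - 1). cw \<tau> * cnorm (link X \<tau>) (d - k) (AA \<tau>))"
proof -
  let ?T = "faces X (k - 1)"
  have finA: "\<forall>\<tau>\<in>?T. finite (lift \<tau> ` AA \<tau>)"
  proof
    fix \<tau> assume t: "\<tau> \<in> ?T"
    have "AA \<tau> \<subseteq> link X \<tau>" using assms[OF t] by blast
    then have "finite (AA \<tau>)" using fin_link[OF t] finite_subset by blast
    then show "finite (lift \<tau> ` AA \<tau>)" by simp
  qed
  have disj: "\<forall>\<tau>\<in>?T. \<forall>\<tau>'\<in>?T. \<tau> \<noteq> \<tau>' \<longrightarrow> lift \<tau> ` AA \<tau> \<inter> lift \<tau>' ` AA \<tau>' = {}"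
  proof (intro ballI impI)
    fix \<tau> \<tau>' assume t: "\<tau> \<in> ?T" "\<tau>' \<in> ?T" "\<tau> \<noteq> \<tau>'"
    show "lift \<tau> ` AA \<tau> \<inter> lift \<tau>' ` AA \<tau>' = {}"
    proof (rule ccontr)
      assume "lift \<tau> ` AA \<tau> \<inter> lift \<tau>' ` AA \<tau>' \<noteq> {}"
      then obtain A A' where AA: "A \<in> AA \<tau>" "A' \<in> AA \<tau>'" "lift \<tau> A = lift \<tau>' A'" by blast
      obtain u v where uv: "A \<in> link X \<tau>" "u \<in> A" "v \<in> A" "u \<noteq> v" using assms[OF t(1)] AA(1) by blast
      obtain u' v' where uv': "A' \<in> link X \<tau>'" "u' \<in> A'" "v' \<in> A'" "u' \<noteq> v'" using assms[OF t(2)] AA(2) by blast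
      have "\<Inter>(lift \<tau> A) = \<tau>" using lift_inter[of A \<tau> u v] uv by (simp add: link_mem)
      moreover have "\<Inter>(lift \<tau>' A') = \<tau>'" using lift_inter[of A' \<tau>' u' v'] uv' by (simp add: link_mem)
      ultimately show False using AA(3) t(3) by simp
    qed
  qed
  have "cnorm R (d - k) (\<Union>\<tau>\<in>?T. lift \<tau> ` AA \<tau>) = (\<Sum>\<tau>\<in>?T. \<Sum>S\<in>lift \<tau> ` AA \<tau>. weight R (d - k) S)"
    unfolding cnorm_def by (rule sum.UNION_disjoint[OF finT finA disj])
  also have "\<dots> = (\<Sum>\<tau>\<in>?T. cw \<tau> * cnorm (link X \<tau>) (d - k) (AA \<tau>))"
  proof (rule sum.cong[OF refl])
    fix \<tau> assume t: "\<tau> \<in> ?T"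
    have dj: "\<And>A. A \<in> AA \<tau> \<Longrightarrow> A \<inter> \<tau> = {}" using assms[OF t] by (auto simp: link_mem)
    have inj: "inj_on (lift \<tau>) (AA \<tau>)" by (rule inj_on_subset[OF lift_inj]) (use dj in auto)
    have "(\<Sum>S\<in>lift \<tau> ` AA \<tau>. weight R (d - k) S) = (\<Sum>A\<in>AA \<tau>. weight R (d - k) (lift \<tau> A))"
      by (rule sum.reindex_cong[OF inj refl refl])
    also have "\<dots> = (\<Sum>A\<in>AA \<tau>. cw \<tau> * weight (link X \<tau>) (d - k) A)"
    proof (rule sum.cong[OF refl])
      fix A assume a: "A \<in> AA \<tau>"
      then obtain u v where "u \<in> A" "v \<in> A" "u \<noteq> v" using assms[OF t] by blast
      then show "weight R (d - k) (lift \<tau> A) = cw \<tau> * weight (link X \<tau>) (d - k) A"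
        using weight_lift[OF t dj[OF a]] by blast
    qed
    also have "\<dots> = cw \<tau> * cnorm (link X \<tau>) (d - k) (AA \<tau>)"
      by (simp add: cnorm_def sum_distrib_left)
    finally show "(\<Sum>S\<in>lift \<tau> ` AA \<tau>. weight R (d - k) S) = cw \<tau> * cnorm (link X \<tau>) (d - k) (AA \<tau>)" .
  qed
  finally show ?thesis .
qed

lemma lift_pair: "lift \<tau> {u, v} = {insert u \<tau>, insert v \<tau>}"
  by (simp add: lift_def)
lemma lift_triple: "lift \<tau> {u, v, w} = {insert u \<tau>, insert v \<tau>, insert w \<tau>}"
  by (simp add: lift_def)

lemma supp1_decomp:
  assumes "\<And>\<tau> u v. \<tau> \<in> faces X (k - 1) \<Longrightarrow> is_edge (link X \<tau>) u v \<Longrightarrow> Gf \<tau> (u, v) = F (insert u \<tau>, insert v \<tau>)"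
  shows "supp1 R G F = (\<Union>\<tau>\<in>faces X (k - 1). lift \<tau> ` supp1 (link X \<tau>) G (Gf \<tau>))"
proof (intro equalityI subsetI)
  fix S assume "S \<in> supp1 R G F"
  then obtain a b where ab: "S = {a, b}" "is_edge R a b" "F (a, b) \<noteq> \<one>\<^bsub>G\<^esub>" unfolding supp1_def by blast
  then obtain \<tau> u v where t: "\<tau> \<in> faces X (k - 1)" "is_edge (link X \<tau>) u v" "a = insert u \<tau>" "b = insert v \<tau>"
    using edge_R[of a b] ab(2) by blast
  have "Gf \<tau> (u, v) \<noteq> \<one>\<^bsub>G\<^esub>" using t ab assms[OF t(1,2)] by simp
  then have "{u, v} \<in> supp1 (link X \<tau>) G (Gf \<tau>)" using t(2) unfolding supp1_def by blast
  moreover have "S = lift \<tau> {u, v}" using ab t by (simp add: lift_pair)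
  ultimately show "S \<in> (\<Union>\<tau>\<in>faces X (k - 1). lift \<tau> ` supp1 (link X \<tau>) G (Gf \<tau>))" using t(1) by blast
next
  fix S assume "S \<in> (\<Union>\<tau>\<in>faces X (k - 1). lift \<tau> ` supp1 (link X \<tau>) G (Gf \<tau>))"
  then obtain \<tau> A where t: "\<tau> \<in> faces X (k - 1)" "A \<in> supp1 (link X \<tau>) G (Gf \<tau>)" "S = lift \<tau> A" by blast
  then obtain u v where uv: "A = {u, v}" "is_edge (link X \<tau>) u v" "Gf \<tau> (u, v) \<noteq> \<one>\<^bsub>G\<^esub>" unfolding supp1_def by blast
  have "is_edge R (insert u \<tau>) (insert v \<tau>)" using edge_R[of "insert u \<tau>" "insert v \<tau>"] t(1) uv(2) by blast
  moreover have "F (insert u \<tau>, insert v \<tau>) \<noteq> \<one>\<^bsub>G\<^esub>" using assms[OF t(1) uv(2)] uv(3) by simp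
  moreover have "S = {insert u \<tau>, insert v \<tau>}" using t(3) uv(1) by (simp add: lift_pair)
  ultimately show "S \<in> supp1 R G F" unfolding supp1_def by blast
qed

lemma supp2_decomp:
  assumes "2 \<le> d - k"
    and "\<And>\<tau> u v w. \<tau> \<in> faces X (k - 1) \<Longrightarrow> is_tri (link X \<tau>) u v w \<Longrightarrow> Gf \<tau> (u, v, w) = F (insert u \<tau>, insert v \<tau>, insert w \<tau>)"
  shows "supp2 R G F = (\<Union>\<tau>\<in>faces X (k - 1). lift \<tau> ` supp2 (link X \<tau>) G (Gf \<tau>))"
proof (intro equalityI subsetI)
  fix S assume "S \<in> supp2 R G F"
  then obtain a b c where ab: "S = {a, b, c}" "is_tri R a b c" "F (a, b, c) \<noteq> \<one>\<^bsub>G\<^esub>" unfolding supp2_def by blast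
  then obtain \<tau> u v w where t: "\<tau> \<in> faces X (k - 1)" "is_tri (link X \<tau>) u v w" "a = insert u \<tau>" "b = insert v \<tau>" "c = insert w \<tau>"
    using tri_R[OF assms(1), of a b c] ab(2) by blast
  have "Gf \<tau> (u, v, w) \<noteq> \<one>\<^bsub>G\<^esub>" using t ab assms(2)[OF t(1,2)] by simp
  then have "{u, v, w} \<in> supp2 (link X \<tau>) G (Gf \<tau>)" using t(2) unfolding supp2_def by blast
  moreover have "S = lift \<tau> {u, v, w}" using ab t by (simp add: lift_triple)
  ultimately show "S \<in> (\<Union>\<tau>\<in>faces X (k - 1). lift \<tau> ` supp2 (link X \<tau>) G (Gf \<tau>))" using t(1) by blast
next
  fix S assume "S \<in> (\<Union>\<tau>\<in>faces X (k - 1). lift \<tau> ` supp2 (link X \<tau>) G (Gf \<tau>))"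
  then obtain \<tau> A where t: "\<tau> \<in> faces X (k - 1)" "A \<in> supp2 (link X \<tau>) G (Gf \<tau>)" "S = lift \<tau> A" by blast
  then obtain u v w where uv: "A = {u, v, w}" "is_tri (link X \<tau>) u v w" "Gf \<tau> (u, v, w) \<noteq> \<one>\<^bsub>G\<^esub>" unfolding supp2_def by blast
  have "is_tri R (insert u \<tau>) (insert v \<tau>) (insert w \<tau>)" using tri_R[OF assms(1), of "insert u \<tau>" "insert v \<tau>" "insert w \<tau>"] t(1) uv(2) by blast
  moreover have "F (insert u \<tau>, insert v \<tau>, insert w \<tau>) \<noteq> \<one>\<^bsub>G\<^esub>" using assms(2)[OF t(1) uv(2)] uv(3) by simp
  moreover have "S = {insert u \<tau>, insert v \<tau>, insert w \<tau>}" using t(3) uv(1) by (simp add: lift_triple)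
  ultimately show "S \<in> supp2 R G F" unfolding supp2_def by blast
qed

lemma supp1_shape: "supp1 (link X \<tau>) G H \<subseteq> {A. A \<in> link X \<tau> \<and> (\<exists>u v. u \<in> A \<and> v \<in> A \<and> u \<noteq> v)}"
  by (auto simp: supp1_def is_edge_def)
lemma supp2_shape: "supp2 (link X \<tau>) G H \<subseteq> {A. A \<in> link X \<tau> \<and> (\<exists>u v. u \<in> A \<and> v \<in> A \<and> u \<noteq> v)}"
  by (auto simp: supp2_def is_tri_def)


lemma edge_sym: "is_edge Y u v \<Longrightarrow> is_edge Y v u"
  by (auto simp: is_edge_def insert_commute)

lemma tri_edges:
  assumes "is_tri (link X \<tau>) u v w"
  shows "is_edge (link X \<tau>) u v" "is_edge (link X \<tau>) v w" "is_edge (link X \<tau>) w u"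
proof -
  have t: "u \<noteq> v" "v \<noteq> w" "u \<noteq> w" "u \<notin> \<tau>" "v \<notin> \<tau>" "w \<notin> \<tau>"
    and X: "insert u (insert v (insert w \<tau>)) \<in> X" using assms by (auto simp: tri_link)
  have "insert u (insert v \<tau>) \<in> X" by (rule sc_down[OF sc X]) blast
  moreover have "insert v (insert w \<tau>) \<in> X" by (rule sc_down[OF sc X]) blast
  moreover have "insert w (insert u \<tau>) \<in> X" by (rule sc_down[OF sc X]) blast
  ultimately show "is_edge (link X \<tau>) u v" "is_edge (link X \<tau>) v w" "is_edge (link X \<tau>) w u"
    using t by (auto simp: edge_link)
qed

lemma main_pos:
  assumes gp: "group G" and D2: "2 \<le> d - k" and gpos: "\<gamma> > 0"
    and hyp: "\<And>\<tau>. \<tau> \<in> faces X (k - 1) \<Longrightarrow> h1_ge (link X \<tau>) (d - k) G \<gamma>"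
    and f: "f \<in> C1 R G"
  shows "\<gamma> * dist1 R (d - k) G f (Z1 R G) \<le> cnorm R (d - k) (supp2 R G (d1 R G f))"
proof -
  let ?T = "faces X (k - 1)"
  let ?D = "d - k"
  define gf where "gf \<tau> = (\<lambda>(u, v). if is_edge (link X \<tau>) u v then f (insert u \<tau>, insert v \<tau>) else \<one>\<^bsub>G\<^esub>)" for \<tau>
  have gfe: "gf \<tau> (u, v) = f (insert u \<tau>, insert v \<tau>)" if "is_edge (link X \<tau>) u v" for \<tau> u v
    using that by (simp add: gf_def)
  have fC: "f (a, b) \<in> carrier G" "f (b, a) = inv\<^bsub>G\<^esub> f (a, b)" if "is_edge R a b" for a b
    using f that by (auto simp: C1_def)
  have Tx: "\<tau> \<in> X" if "\<tau> \<in> ?T" for \<tau> using that by (simp add: faces_def)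
  have gfC: "gf \<tau> \<in> C1 (link X \<tau>) G" if t: "\<tau> \<in> ?T" for \<tau>
    unfolding C1_def
  proof (intro CollectI allI conjI impI)
    fix u v assume e: "is_edge (link X \<tau>) u v"
    have eR: "is_edge R (insert u \<tau>) (insert v \<tau>)" using edge_R[of "insert u \<tau>" "insert v \<tau>"] t e by blast
    show "gf \<tau> (u, v) \<in> carrier G" using gfe[OF e] fC(1)[OF eR] by simp
    show "gf \<tau> (v, u) = inv\<^bsub>G\<^esub> gf \<tau> (u, v)" using gfe[OF e] gfe[OF edge_sym[OF e]] fC(2)[OF eR] by simp
  next
    fix u v assume "\<not> is_edge (link X \<tau>) u v"
    then show "gf \<tau> (u, v) = \<one>\<^bsub>G\<^esub>" by (simp add: gf_def)
  qed
  have d1e: "d1 (link X \<tau>) G (gf \<tau>) (u, v, w) = d1 R G f (insert u \<tau>, insert v \<tau>, insert w \<tau>)"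
    if t: "\<tau> \<in> ?T" and tr: "is_tri (link X \<tau>) u v w" for \<tau> u v w
  proof -
    have tR: "is_tri R (insert u \<tau>) (insert v \<tau>) (insert w \<tau>)"
      using tri_R[OF D2, of "insert u \<tau>" "insert v \<tau>" "insert w \<tau>"] t tr by blast
    show ?thesis using tr tR gfe[OF tri_edges(1)[OF tr]] gfe[OF tri_edges(2)[OF tr]] gfe[OF tri_edges(3)[OF tr]]
      by (simp add: d1_def)
  qed
  have LHS: "cnorm R ?D (supp2 R G (d1 R G f))
      = (\<Sum>\<tau>\<in>?T. cw \<tau> * cnorm (link X \<tau>) ?D (supp2 (link X \<tau>) G (d1 (link X \<tau>) G (gf \<tau>))))"
  proof -
    have "supp2 R G (d1 R G f) = (\<Union>\<tau>\<in>?T. lift \<tau> ` supp2 (link X \<tau>) G (d1 (link X \<tau>) G (gf \<tau>)))"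
      by (rule supp2_decomp[OF D2]) (rule d1e)
    then show ?thesis using cnorm_decomp[OF supp2_shape] by simp
  qed
  have ex: "\<forall>\<tau>\<in>?T. \<exists>h. h \<in> Z1 (link X \<tau>) G \<and> dist1 (link X \<tau>) ?D G (gf \<tau>) (Z1 (link X \<tau>) G)
      = cnorm (link X \<tau>) ?D (supp1 (link X \<tau>) G (\<lambda>e. gf \<tau> e \<otimes>\<^bsub>G\<^esub> inv\<^bsub>G\<^esub> (h e)))"
  proof
    fix \<tau> assume t: "\<tau> \<in> ?T"
    have "Z1 (link X \<tau>) G \<noteq> {}" using one_Z1[OF gp] by blast
    then show "\<exists>h. h \<in> Z1 (link X \<tau>) G \<and> dist1 (link X \<tau>) ?D G (gf \<tau>) (Z1 (link X \<tau>) G)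
      = cnorm (link X \<tau>) ?D (supp1 (link X \<tau>) G (\<lambda>e. gf \<tau> e \<otimes>\<^bsub>G\<^esub> inv\<^bsub>G\<^esub> (h e)))"
      using dist1_attained[OF fin_link[OF t]] by blast
  qed
  obtain hh where hh: "\<forall>\<tau>\<in>?T. hh \<tau> \<in> Z1 (link X \<tau>) G \<and> dist1 (link X \<tau>) ?D G (gf \<tau>) (Z1 (link X \<tau>) G)
      = cnorm (link X \<tau>) ?D (supp1 (link X \<tau>) G (\<lambda>e. gf \<tau> e \<otimes>\<^bsub>G\<^esub> inv\<^bsub>G\<^esub> (hh \<tau> e)))"
    using bchoice[OF ex] by blast
  define H where "H = (\<lambda>(a, b). if is_edge R a b then hh (a \<inter> b) (the_elem (a - (a \<inter> b)), the_elem (b - (a \<inter> b))) else \<one>\<^bsub>G\<^esub>)"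
  have He: "H (insert u \<tau>, insert v \<tau>) = hh \<tau> (u, v)" if t: "\<tau> \<in> ?T" and e: "is_edge (link X \<tau>) u v" for \<tau> u v
  proof -
    have eR: "is_edge R (insert u \<tau>) (insert v \<tau>)" using edge_R[of "insert u \<tau>" "insert v \<tau>"] t e by blast
    have uv: "u \<noteq> v" "u \<notin> \<tau>" "v \<notin> \<tau>" using e by (auto simp: edge_link)
    have i: "insert u \<tau> \<inter> insert v \<tau> = \<tau>" using uv by auto
    have "insert u \<tau> - \<tau> = {u}" "insert v \<tau> - \<tau> = {v}" using uv by auto
    then show ?thesis using eR i by (simp add: H_def)
  qed
  have hhC: "hh \<tau> \<in> C1 (link X \<tau>) G" and hhZ: "\<And>u v w. is_tri (link X \<tau>) u v w \<Longrightarrow> d1 (link X \<tau>) G (hh \<tau>) (u, v, w) = \<one>\<^bsub>G\<^esub>"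
    if "\<tau> \<in> ?T" for \<tau> using hh that by (auto simp: Z1_def)
  have HC: "H \<in> C1 R G"
    unfolding C1_def
  proof (intro CollectI allI conjI impI)
    fix a b assume e: "is_edge R a b"
    then obtain \<tau> u v where t: "\<tau> \<in> ?T" "is_edge (link X \<tau>) u v" "a = insert u \<tau>" "b = insert v \<tau>"
      using edge_R[of a b] by blast
    have c: "hh \<tau> (u, v) \<in> carrier G" "hh \<tau> (v, u) = inv\<^bsub>G\<^esub> hh \<tau> (u, v)"
      using hhC[OF t(1)] t(2) by (auto simp: C1_def)
    show "H (a, b) \<in> carrier G" using He[OF t(1,2)] c t by simp
    show "H (b, a) = inv\<^bsub>G\<^esub> H (a, b)" using He[OF t(1,2)] He[OF t(1) edge_sym[OF t(2)]] c t by simp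
  next
    fix a b assume "\<not> is_edge R a b"
    then show "H (a, b) = \<one>\<^bsub>G\<^esub>" by (simp add: H_def)
  qed
  have HZ: "H \<in> Z1 R G"
    unfolding Z1_def
  proof (intro CollectI conjI allI impI)
    show "H \<in> C1 R G" by (rule HC)
  next
    fix a b c assume tr: "is_tri R a b c"
    then obtain \<tau> u v w where t: "\<tau> \<in> ?T" "is_tri (link X \<tau>) u v w" "a = insert u \<tau>" "b = insert v \<tau>" "c = insert w \<tau>"
      using tri_R[OF D2, of a b c] by blast
    have "d1 (link X \<tau>) G (hh \<tau>) (u, v, w) = \<one>\<^bsub>G\<^esub>" using hhZ[OF t(1,2)] .
    then show "d1 R G H (a, b, c) = \<one>\<^bsub>G\<^esub>"
      using tr t He[OF t(1) tri_edges(1)[OF t(2)]] He[OF t(1) tri_edges(2)[OF t(2)]] He[OF t(1) tri_edges(3)[OF t(2)]]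
      by (simp add: d1_def)
  qed
  have RHS: "cnorm R ?D (supp1 R G (\<lambda>e. f e \<otimes>\<^bsub>G\<^esub> inv\<^bsub>G\<^esub> (H e)))
      = (\<Sum>\<tau>\<in>?T. cw \<tau> * cnorm (link X \<tau>) ?D (supp1 (link X \<tau>) G (\<lambda>e. gf \<tau> e \<otimes>\<^bsub>G\<^esub> inv\<^bsub>G\<^esub> (hh \<tau> e))))"
  proof -
    have "supp1 R G (\<lambda>e. f e \<otimes>\<^bsub>G\<^esub> inv\<^bsub>G\<^esub> (H e))
        = (\<Union>\<tau>\<in>?T. lift \<tau> ` supp1 (link X \<tau>) G (\<lambda>e. gf \<tau> e \<otimes>\<^bsub>G\<^esub> inv\<^bsub>G\<^esub> (hh \<tau> e)))"
      by (rule supp1_decomp) (simp add: gfe He)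
    then show ?thesis using cnorm_decomp[OF supp1_shape] by simp
  qed
  have loc: "\<gamma> * dist1 (link X \<tau>) ?D G (gf \<tau>) (Z1 (link X \<tau>) G)
      \<le> cnorm (link X \<tau>) ?D (supp2 (link X \<tau>) G (d1 (link X \<tau>) G (gf \<tau>)))" if t: "\<tau> \<in> ?T" for \<tau>
    by (rule local_ineq[OF link_sc[OF sc Tx[OF t]] gp hyp[OF t] gpos gfC[OF t]])
  have "\<gamma> * dist1 R ?D G f (Z1 R G) \<le> \<gamma> * cnorm R ?D (supp1 R G (\<lambda>e. f e \<otimes>\<^bsub>G\<^esub> inv\<^bsub>G\<^esub> (H e)))"
    using dist1_lower[OF finR HZ, of ?D G f] gpos by simp
  also have "\<dots> = (\<Sum>\<tau>\<in>?T. cw \<tau> * (\<gamma> * dist1 (link X \<tau>) ?D G (gf \<tau>) (Z1 (link X \<tau>) G)))"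
    unfolding RHS sum_distrib_left
    using hh by (intro sum.cong refl) simp
  also have "\<dots> \<le> (\<Sum>\<tau>\<in>?T. cw \<tau> * cnorm (link X \<tau>) ?D (supp2 (link X \<tau>) G (d1 (link X \<tau>) G (gf \<tau>))))"
    by (intro sum_mono mult_left_mono loc cw_nonneg)
  also have "\<dots> = cnorm R ?D (supp2 R G (d1 R G f))" using LHS by simp
  finally show ?thesis .
qed

end

theorem mainTheorem3:
  fixes X :: "'v set set" and d k :: nat and G :: "('g, 'b) monoid_scheme" and \<gamma> :: real
  assumes "simplicial_complex X" and "pure X d"
    and "group G"
    and "coboundary_expander X d G \<gamma>"
    and "1 \<le> k" and "k \<le> d - 1"
    and "f \<in> C1 (rep_complex X d k) G"
  shows "cnorm (rep_complex X d k) (d - k) (supp2 (rep_complex X d k) G (d1 (rep_complex X d k) G f))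
           \<ge> \<gamma> * dist1 (rep_complex X d k) (d - k) G f (Z1 (rep_complex X d k) G)"
proof -
  have kd: "k < d" using assms(5,6) by linarith
  interpret repc X d k by unfold_locales (use assms(1,5) kd in auto)
  have Zne: "Z1 R G \<noteq> {}" using one_Z1[OF assms(3)] by blast
  show ?thesis
  proof (cases "\<gamma> \<le> 0")
    case True
    have "dist1 R (d - k) G f (Z1 R G) \<ge> 0" by (rule dist1_nonneg[OF finR Zne])
    then have "\<gamma> * dist1 R (d - k) G f (Z1 R G) \<le> 0" using True by (simp add: mult_nonpos_nonneg)
    then show ?thesis using cnorm_nonneg[of R "d - k" "supp2 R G (d1 R G f)"] by linarith
  next
    case False
    then have gpos: "\<gamma> > 0" by simp
    show ?thesis
    proof (cases "d - k = 1")
      case True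
      have "f \<in> Z1 R G" using assms(7) no_tri_R[OF True] by (simp add: Z1_def)
      then have "dist1 R (d - k) G f (Z1 R G) = 0" by (rule Z1_dist_zero[OF assms(3) finR])
      then show ?thesis using cnorm_nonneg by simp
    next
      case False
      then have D2: "2 \<le> d - k" using kd by linarith
      have hyp: "h1_ge (link X \<tau>) (d - k) G \<gamma>" if t: "\<tau> \<in> faces X (k - 1)" for \<tau>
      proof -
        have tX: "\<tau> \<in> X" and ct: "card \<tau> = k" using t assms(5) by (auto simp: faces_def)
        have "int (card \<tau>) - 1 < int d - 2" using ct D2 by linarith
        then show ?thesis using assms(4) tX ct by (auto simp: coboundary_expander_def)
      qed
      show ?thesis using main_pos[OF assms(3) D2 gpos hyp assms(7)] by simp
    qed
  qed
qed

end
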